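(* Let $N\ge1$, $\mathbf{h}_s,\mathbf{h}_0\in\mathbb{C}^N$, $\sigma>0$, $\epsilon>0$, $\bar P>0$, $P_t>0$, and let $\mathcal{B}=\{\mathbf{h}\in\mathbb{C}^N:\|\mathbf{h}-\mathbf{h}_0\|^2\le\epsilon\sigma^2\}$. Consider the mean feedback problem $$\mathbf{P3}:\ \max_{p\ge0,\ \|\mathbf{v}\|=1}\log\big(1+p\,\mathbf{h}_s^H\mathbf{v}\mathbf{v}^H\mathbf{h}_s\big)\ \text{ s.t. } p\le\bar P,\ \ p\,\mathbf{h}^H\mathbf{v}\mathbf{v}^H\mathbf{h}\le P_t\ \forall\mathbf{h}\in\mathcal{B},$$ and its two subproblems $\mathbf{SP1}$ (same objective, only the constraint $p\le\bar P$) and $\mathbf{SP2}$ (same objective, only the constraints $p\,\mathbf{h}^H\mathbf{v}\mathbf{v}^H\mathbf{h}\le P_t$ for all $\mathbf{h}\in\mathcal{B}$). Identify a feasible pair $(p,\mathbf{v})$ with $\mathbf{S}=p\mathbf{v}\mathbf{v}^H$. Let $\mathbf{S}_1$ be the optimal solution of $\mathbf{SP1}$ and $\mathbf{S}_2$ the optimal solution of $\mathbf{SP2}$. Then: (i) if $\mathbf{S}_1$ satisfies the constraint of $\mathbf{SP2}$, then $\mathbf{S}_1$ is the optimal solution of $\mathbf{P3}$; (ii) if $\mathbf{S}_2$ satisfies the constraint of $\mathbf{SP1}$, i.e. $\mathrm{tr}(\mathbf{S}_2)\le\bar P$, then $\mathbf{S}_2$ is the optimal solution of $\mathbf{P3}$;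 (iii) otherwise, the optimal solution $\mathbf{S}$ of $\mathbf{P3}$ satisfies both $\mathrm{tr}(\mathbf{S})=\bar P$ and $\mathbf{h}_{\mathrm{opt}}^H\mathbf{S}\mathbf{h}_{\mathrm{opt}}=P_t$, where $\mathbf{h}_{\mathrm{opt}}=\arg\max_{\mathbf{h}\in\mathcal{B}}\mathbf{h}^H\mathbf{S}\mathbf{h}$.
   Context: $\mathbf{P3}$ is the special case of the robust cognitive beamforming problem in which the channel-uncertainty covariance is $\sigma^2\mathbf{I}$ (mean feedback), so the uncertainty set is a Euclidean ball of radius $\sqrt{\epsilon}\sigma$ around $\mathbf{h}_0$. *)

theory Defs
  imports "HOL-Analysis.Analysis"
begin

text \<open>Vectors in C^N are modelled as complex ^ 'n (N = CARD('n) >= 1);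
  matrices as complex ^ 'n ^ 'n.\<close>

definition outer :: "real \<Rightarrow> complex ^ 'n \<Rightarrow> complex ^ 'n ^ 'n" where
  "outer p v = (\<chi> i j. complex_of_real p * v $ i * cnj (v $ j))"

text \<open>Hermitian form h^H S h (real part; it is real for Hermitian S).\<close>
definition hform :: "complex ^ 'n ^ 'n \<Rightarrow> complex ^ 'n \<Rightarrow> real" where
  "hform S h = Re (\<Sum>i\<in>UNIV. \<Sum>j\<in>UNIV. cnj (h $ i) * S $ i $ j * h $ j)"

definition mtrace :: "complex ^ 'n ^ 'n \<Rightarrow> real" where
  "mtrace S = Re (\<Sum>i\<in>UNIV. S $ i $ i)"

definition unc_ball :: "complex ^ 'n \<Rightarrow> real \<Rightarrow> real \<Rightarrow> (complex ^ 'n) set" where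
  "unc_ball h0 eps sg = {h. (norm (h - h0))\<^sup>2 \<le> eps * sg\<^sup>2}"

definition beam :: "complex ^ 'n ^ 'n \<Rightarrow> bool" where
  "beam S \<longleftrightarrow> (\<exists>p v. p \<ge> 0 \<and> norm v = 1 \<and> S = outer p v)"

definition rate :: "complex ^ 'n \<Rightarrow> complex ^ 'n ^ 'n \<Rightarrow> real" where
  "rate hs S = ln (1 + hform S hs)"

definition power_con :: "real \<Rightarrow> complex ^ 'n ^ 'n \<Rightarrow> bool" where
  "power_con Pbar S \<longleftrightarrow> mtrace S \<le> Pbar"

definition interf_con :: "complex ^ 'n \<Rightarrow> real \<Rightarrow> real \<Rightarrow> real \<Rightarrow> complex ^ 'n ^ 'n \<Rightarrow> bool" where
  "interf_con h0 eps sg Pt S \<longleftrightarrow> (\<forall>h\<in>unc_ball h0 eps sg. hform S h \<le> Pt)"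

definition feas_SP1 where "feas_SP1 Pbar S \<longleftrightarrow> beam S \<and> power_con Pbar S"
definition feas_SP2 where "feas_SP2 h0 eps sg Pt S \<longleftrightarrow> beam S \<and> interf_con h0 eps sg Pt S"
definition feas_P3 where
  "feas_P3 h0 eps sg Pbar Pt S \<longleftrightarrow> beam S \<and> power_con Pbar S \<and> interf_con h0 eps sg Pt S"

definition is_opt :: "('a \<Rightarrow> bool) \<Rightarrow> ('a \<Rightarrow> real) \<Rightarrow> 'a \<Rightarrow> bool" where
  "is_opt F f S \<longleftrightarrow> F S \<and> (\<forall>S'. F S' \<longrightarrow> f S' \<le> f S)"

end

theory Submission
  imports Defs
begin

definition ip :: "complex ^ 'n::finite \<Rightarrow> complex ^ 'n \<Rightarrow> complex" where
  "ip h w = (\<Sum>i\<in>UNIV. cnj (h $ i) * w $ i)"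

definition rot :: "complex \<Rightarrow> complex ^ 'n::finite \<Rightarrow> complex ^ 'n" where
  "rot c w = (\<chi> i. c * w $ i)"

lemma sq_cnj: "z * cnj z = complex_of_real ((cmod z)\<^sup>2)"
  by (metis complex_norm_square of_real_power)

lemma hform_outer: "hform (outer p v) h = p * (cmod (ip h v))\<^sup>2"
proof -
  have "(\<Sum>i\<in>UNIV. \<Sum>j\<in>UNIV. cnj (h $ i) * outer p v $ i $ j * h $ j)
      = complex_of_real p * (ip h v * cnj (ip h v))"
    by (simp add: outer_def ip_def sum_distrib_left sum_distrib_right mult_ac)
  then show ?thesis by (simp add: hform_def sq_cnj)
qed

lemma norm_sq: "(norm (v :: complex ^ 'n))\<^sup>2 = (\<Sum>i\<in>UNIV. (cmod (v $ i))\<^sup>2)"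
  by (simp add: norm_vec_def L2_set_def sum_nonneg)

lemma mtrace_outer: "mtrace (outer p v) = p * (norm v)\<^sup>2"
proof -
  have "(\<Sum>i\<in>UNIV. outer p v $ i $ i) = complex_of_real p * (\<Sum>i\<in>UNIV. v $ i * cnj (v $ i))"
    by (simp add: outer_def sum_distrib_left mult_ac)
  also have "\<dots> = complex_of_real (p * (\<Sum>i\<in>UNIV. (cmod (v $ i))\<^sup>2))"
    by (simp add: sq_cnj)
  finally show ?thesis by (simp add: mtrace_def norm_sq)
qed

lemma ip_rot: "ip h (rot c w) = c * ip h w"
  by (simp add: ip_def rot_def sum_distrib_left mult_ac)

lemma norm_rot: "cmod c = 1 \<Longrightarrow> norm (rot c w) = norm w"
  by (simp add: norm_vec_def rot_def norm_mult)

lemma comp_scale: "((a::real) *\<^sub>R (x::complex^'n::finite)) $ i = complex_of_real a * x $ i"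
  by (simp only: vector_scaleR_component) (simp add: scaleR_conv_of_real)

lemma norm_axis_c: "norm (axis (i::'n::finite) (1::complex)) = 1"
proof -
  have "(\<Sum>j\<in>UNIV. (cmod (axis i (1::complex) $ j))\<^sup>2) = 1"
    by (simp add: axis_def if_distrib[of "\<lambda>x. (cmod x)\<^sup>2"] cong: if_cong)
  then have "(norm (axis i (1::complex)))\<^sup>2 = 1" by (simp add: norm_sq)
  then show ?thesis by (simp add: power2_eq_1_iff)
qed

lemma ip_comb: "ip h (a *\<^sub>R x + b *\<^sub>R y) = of_real a * ip h x + of_real b * ip h y"
  unfolding ip_def by (simp only: vector_add_component comp_scale)
    (simp add: sum.distrib sum_distrib_left algebra_simps)

lemma ip_scale: "ip h (a *\<^sub>R x) = of_real a * ip h x"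
  unfolding ip_def by (simp only: comp_scale)
    (simp add: sum_distrib_left algebra_simps)

lemma ip_bound: "cmod (ip h w) \<le> real CARD('n) * (norm h * norm w)" for h w :: "complex ^ 'n"
proof -
  have "cmod (ip h w) \<le> (\<Sum>i\<in>UNIV. cmod (cnj (h $ i) * w $ i))"
    unfolding ip_def by (rule norm_sum)
  also have "\<dots> \<le> (\<Sum>i\<in>(UNIV::'n set). norm h * norm w)"
  proof (rule sum_mono)
    fix i
    show "cmod (cnj (h$i) * w$i) \<le> norm h * norm w"
      unfolding norm_mult complex_mod_cnj by (simp add: Finite_Cartesian_Product.norm_nth_le mult_mono)
  qed
  finally show ?thesis by simp
qed

lemma beam_of: fixes w :: "complex ^ 'n::finite" shows "\<exists>S. beam S \<and> (\<forall>h. hform S h = (cmod (ip h w))\<^sup>2) \<and> mtrace S = (norm w)\<^sup>2"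
proof (cases "w = 0")
  case True
  obtain i :: 'n where True by simp
  have "norm (axis i (1::complex)) = 1" by (rule norm_axis_c)
  then have "beam (outer 0 (axis i 1) :: complex^'n^'n)" unfolding beam_def by blast
  then show ?thesis using True
    by (intro exI[of _ "outer 0 (axis i 1)"]) (auto simp: hform_outer mtrace_outer ip_def)
next
  case False
  define v where "v = (1 / norm w) *\<^sub>R w"
  have nv: "norm v = 1" using False by (simp add: v_def)
  have "beam (outer ((norm w)\<^sup>2) v)" unfolding beam_def using nv zero_le_power2 by blast
  moreover have "hform (outer ((norm w)\<^sup>2) v) h = (cmod (ip h w))\<^sup>2" for h
    using False by (simp add: hform_outer v_def ip_scale norm_mult norm_divide power_divide power_mult_distrib)
  moreover have "mtrace (outer ((norm w)\<^sup>2) v) = (norm w)\<^sup>2"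
    by (simp add: mtrace_outer nv)
  ultimately show ?thesis by blast
qed

lemma of_beam:
  fixes S :: "complex ^ 'n::finite ^ 'n"
  assumes "beam S" "cmod c = 1"
  shows "\<exists>w. (\<forall>h. hform S h = (cmod (ip h (rot c w)))\<^sup>2) \<and> mtrace S = (norm (rot c w))\<^sup>2"
proof -
  obtain p v where pv: "p \<ge> 0" "norm v = 1" "S = outer p v" using assms unfolding beam_def by auto
  show ?thesis
    using pv assms
    by (intro exI[of _ "sqrt p *\<^sub>R v"])
       (simp add: hform_outer mtrace_outer ip_rot ip_scale norm_mult power_mult_distrib norm_rot)
qed

lemma phase:
  fixes a b :: complex and t :: real
  assumes "0 \<le> t" "t \<le> 1"
  shows "\<exists>c. cmod c = 1 \<and> cmod (of_real (1 - t) * a + of_real t * (c * b)) = (1 - t) * cmod a + t * cmod b"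
proof (cases "a = 0 \<or> b = 0")
  case True
  have e: "cmod (complex_of_real (1-t) * a) = (1 - t) * cmod a"
    by (metis assms(2) abs_of_nonneg diff_ge_0_iff_ge norm_mult norm_of_real)
  have e2: "cmod (complex_of_real t * b) = t * cmod b"
    by (metis assms(1) abs_of_nonneg norm_mult norm_of_real)
  show ?thesis
  proof (cases "b = 0")
    case True then show ?thesis using e by (intro exI[of _ 1]) simp
  next
    case False then have "a = 0" using \<open>a = 0 \<or> b = 0\<close> by simp
    then show ?thesis using e2 by (intro exI[of _ 1]) simp
  qed
next
  case False
  define c where "c = sgn a * cnj (sgn b)"
  have c1: "cmod c = 1" using False by (simp add: c_def norm_mult sgn_eq_0_iff norm_sgn)
  have "c * b = sgn a * of_real (cmod b)"
  proof -
    have "cnj (sgn b) * b = cnj b * b / of_real (cmod b)"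
      using sgn_eq by simp
    also have "\<dots> = of_real ((cmod b)\<^sup>2) / of_real (cmod b)"
      by (metis mult.commute sq_cnj)
    also have "\<dots> = of_real (cmod b)" using False
      by (simp add: power2_eq_square)
    finally show ?thesis unfolding c_def by (simp add: mult.assoc)
  qed
  moreover have a_eq: "a = sgn a * of_real (cmod a)"
    using False by (simp add: sgn_eq)
  ultimately have "of_real (1 - t) * a + of_real t * (c * b)
      = of_real (1 - t) * (sgn a * of_real (cmod a)) + of_real t * (sgn a * of_real (cmod b))"
    by simp
  also have "\<dots> = sgn a * of_real ((1-t) * cmod a + t * cmod b)"
    by (simp add: algebra_simps)
  finally have "of_real (1 - t) * a + of_real t * (c * b) = sgn a * of_real ((1-t) * cmod a + t * cmod b)" .
  moreover have "cmod (sgn a * of_real ((1-t) * cmod a + t * cmod b)) = (1-t) * cmod a + t * cmod b"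
  proof -
    have nn: "(1-t) * cmod a + t * cmod b \<ge> 0" using assms by simp
    have "cmod (sgn a) = 1" using False by (simp add: norm_sgn)
    then show ?thesis using nn by (metis abs_of_nonneg mult_1_left norm_mult norm_of_real)
  qed
  ultimately show ?thesis using c1 by metis
qed

lemma of_beam1:
  fixes S :: "complex ^ 'n::finite ^ 'n"
  assumes "beam S"
  shows "\<exists>w. (\<forall>h. hform S h = (cmod (ip h w))\<^sup>2) \<and> mtrace S = (norm w)\<^sup>2"
  using of_beam[OF assms, of 1] by auto

lemma comb:
  fixes w w' hs :: "complex ^ 'n::finite" and t :: real
  assumes "0 < t" "t \<le> 1" "cmod (ip hs w) < cmod (ip hs w')"
  shows "\<exists>u. cmod (ip hs w) < cmod (ip hs u) \<and> norm u \<le> (1-t) * norm w + t * norm w'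
     \<and> (\<forall>h. cmod (ip h u) \<le> (1-t) * cmod (ip h w) + t * cmod (ip h w'))"
proof -
  obtain c where c: "cmod c = 1"
    "cmod (of_real (1 - t) * ip hs w + of_real t * (c * ip hs w')) = (1 - t) * cmod (ip hs w) + t * cmod (ip hs w')"
    using phase[of t "ip hs w" "ip hs w'"] assms by auto
  define u where "u = (1-t) *\<^sub>R w + t *\<^sub>R rot c w'"
  have "cmod (ip hs u) = (1 - t) * cmod (ip hs w) + t * cmod (ip hs w')"
    using c by (simp add: u_def ip_comb ip_rot)
  also have "\<dots> > cmod (ip hs w)"
  proof -
    have "t * cmod (ip hs w) < t * cmod (ip hs w')" using assms by simp
    then show ?thesis by (simp add: algebra_simps)
  qed
  finally have 1: "cmod (ip hs w) < cmod (ip hs u)" .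
  have "norm u \<le> norm ((1-t) *\<^sub>R w) + norm (t *\<^sub>R rot c w')"
    unfolding u_def by (rule norm_triangle_ineq)
  also have "\<dots> = (1-t) * norm w + t * norm w'"
    using assms c by (simp add: norm_rot)
  finally have 2: "norm u \<le> (1-t) * norm w + t * norm w'" .
  have 3: "cmod (ip h u) \<le> (1-t) * cmod (ip h w) + t * cmod (ip h w')" for h
  proof -
    have "cmod (ip h u) \<le> cmod (of_real (1-t) * ip h w) + cmod (of_real t * (c * ip h w'))"
      unfolding u_def ip_comb ip_rot by (rule norm_triangle_ineq)
    also have "\<dots> = (1-t) * cmod (ip h w) + t * cmod (ip h w')"
      using assms c by (simp add: norm_mult del: of_real_diff)
    finally show ?thesis .
  qed
  show ?thesis using 1 2 3 by blast
qed

lemma rate_eq: "hform S hs = (cmod (ip hs w))\<^sup>2 \<Longrightarrow> rate hs S = ln (1 + (cmod (ip hs w))\<^sup>2)"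
  by (simp add: rate_def)

lemma ln_mono_sq:
  assumes "ln (1 + (x::real)\<^sup>2) < ln (1 + y\<^sup>2)" "0 \<le> x" "0 \<le> y"
  shows "x < y"
proof -
  have "(1 + x\<^sup>2) < 1 + y\<^sup>2"
    using assms(1) by (simp add: add_pos_nonneg)
  then have "x\<^sup>2 < y\<^sup>2" by simp
  then show ?thesis using assms(2,3) by (simp add: power_less_imp_less_base)
qed

lemma ln_mono_sq2:
  assumes "(x::real) < y" "0 \<le> x"
  shows "ln (1 + x\<^sup>2) < ln (1 + y\<^sup>2)"
proof -
  have "x\<^sup>2 < y\<^sup>2" using assms by (simp add: power_strict_mono)
  then show ?thesis by (simp add: add_pos_nonneg)
qed

lemma sq_le_sqrt: "(x::real)\<^sup>2 \<le> P \<Longrightarrow> 0 \<le> x \<Longrightarrow> x \<le> sqrt P"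
  by (simp add: real_le_rsqrt)

lemma le_sqrt_sq: "0 \<le> (x::real) \<Longrightarrow> x \<le> sqrt P \<Longrightarrow> 0 \<le> P \<Longrightarrow> x\<^sup>2 \<le> P"
  by (metis real_sqrt_le_iff real_sqrt_abs abs_of_nonneg)

lemma opt_SP2:
  fixes S :: "complex ^ 'n::finite ^ 'n"
  assumes opt: "is_opt (feas_P3 h0 eps sg Pbar Pt) (rate hs) S" and lt: "mtrace S < Pbar"
  shows "is_opt (feas_SP2 h0 eps sg Pt) (rate hs) S"
  unfolding is_opt_def
proof (intro conjI allI impI)
  have fS: "beam S" "power_con Pbar S" "interf_con h0 eps sg Pt S"
    using opt by (auto simp: is_opt_def feas_P3_def)
  then show "feas_SP2 h0 eps sg Pt S" by (simp add: feas_SP2_def)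
  fix S' assume f': "feas_SP2 h0 eps sg Pt S'"
  show "rate hs S' \<le> rate hs S"
  proof (rule ccontr)
    assume nle: "\<not> rate hs S' \<le> rate hs S"
    obtain w where w: "\<forall>h. hform S h = (cmod (ip h w))\<^sup>2" "mtrace S = (norm w)\<^sup>2"
      using of_beam1[OF fS(1)] by blast
    obtain w' where w': "\<forall>h. hform S' h = (cmod (ip h w'))\<^sup>2" "mtrace S' = (norm w')\<^sup>2"
      using of_beam1[of S'] f' unfolding feas_SP2_def by blast
    have r1: "rate hs S = ln (1 + (cmod (ip hs w))\<^sup>2)" using w(1) by (simp add: rate_def)
    have r2: "rate hs S' = ln (1 + (cmod (ip hs w'))\<^sup>2)" using w'(1) by (simp add: rate_def)
    have lt2: "cmod (ip hs w) < cmod (ip hs w')"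
    proof -
      have "ln (1 + (cmod (ip hs w))\<^sup>2) < ln (1 + (cmod (ip hs w'))\<^sup>2)"
        using nle r1 r2 by linarith
      then show ?thesis using ln_mono_sq[OF _ norm_ge_zero norm_ge_zero] by blast
    qed
    have Pb: "0 < Pbar" using lt w(2) zero_le_power2[of "norm w"] by linarith
    have nw: "norm w < sqrt Pbar" using lt w(2) by (simp add: real_less_rsqrt)
    define t where "t = min 1 ((sqrt Pbar - norm w) / (norm w' + 1))"
    have c: "0 < norm w' + 1" by (simp add: add_nonneg_pos)
    have t0: "0 < t" using nw c by (simp add: t_def divide_pos_pos)
    have t1: "t \<le> 1" by (simp add: t_def)
    have tb: "t * (norm w' + 1) \<le> sqrt Pbar - norm w"
    proof -
      have "t \<le> (sqrt Pbar - norm w) / (norm w' + 1)" by (simp add: t_def)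
      then show ?thesis by (simp only: pos_le_divide_eq[OF c])
    qed
    obtain u where u: "cmod (ip hs w) < cmod (ip hs u)" "norm u \<le> (1-t) * norm w + t * norm w'"
      "\<forall>h. cmod (ip h u) \<le> (1-t) * cmod (ip h w) + t * cmod (ip h w')"
      using comb[OF t0 t1 lt2] by blast
    have "norm u < sqrt Pbar"
    proof -
      have "(1-t) * norm w \<le> norm w" using mult_nonneg_nonneg[of t "norm w"] t0 by (simp add: left_diff_distrib)
      moreover have "t * norm w' < t * (norm w' + 1)" using t0 by simp
      ultimately show ?thesis using u(2) tb by linarith
    qed
    then have pu: "(norm u)\<^sup>2 \<le> Pbar" using Pb by (intro le_sqrt_sq) auto
    have iu: "(cmod (ip h u))\<^sup>2 \<le> Pt" if hB: "h \<in> unc_ball h0 eps sg" for h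
    proof -
      have a: "(cmod (ip h w))\<^sup>2 \<le> Pt" using fS(3) hB w by (auto simp: interf_con_def)
      have b: "(cmod (ip h w'))\<^sup>2 \<le> Pt" using f' hB w' by (auto simp: interf_con_def feas_SP2_def)
      have Pt0: "0 \<le> Pt" using a by (metis order.trans zero_le_power2)
      have "(1-t) * cmod (ip h w) \<le> (1-t) * sqrt Pt"
        using t1 sq_le_sqrt[OF a] by (intro mult_left_mono) auto
      moreover have "t * cmod (ip h w') \<le> t * sqrt Pt"
        using t0 sq_le_sqrt[OF b] by (intro mult_left_mono) auto
      ultimately have "cmod (ip h u) \<le> (1-t) * sqrt Pt + t * sqrt Pt"
        using u(3) by (meson add_mono order.trans)
      then have "cmod (ip h u) \<le> sqrt Pt" by (simp add: algebra_simps)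
      then show ?thesis using Pt0 by (intro le_sqrt_sq) auto
    qed
    obtain S'' where S'': "beam S''" "\<forall>h. hform S'' h = (cmod (ip h u))\<^sup>2" "mtrace S'' = (norm u)\<^sup>2"
      using beam_of by blast
    have "feas_P3 h0 eps sg Pbar Pt S''"
      using S'' pu iu by (simp add: feas_P3_def power_con_def interf_con_def)
    then have "rate hs S'' \<le> rate hs S" using opt by (simp add: is_opt_def)
    moreover have "rate hs S < rate hs S''"
    proof -
      have "rate hs S = ln (1 + (cmod (ip hs w))\<^sup>2)" using w(1) by (simp add: rate_def)
      moreover have "rate hs S'' = ln (1 + (cmod (ip hs u))\<^sup>2)" using S''(2) by (simp add: rate_def)
      ultimately show ?thesis using ln_mono_sq2[OF u(1) norm_ge_zero] by simp
    qed
    ultimately show False by simp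
  qed
qed

lemma ball_norm: "h \<in> unc_ball h0 eps sg \<Longrightarrow> norm h \<le> norm h0 + sqrt (eps * sg\<^sup>2)"
proof -
  assume "h \<in> unc_ball h0 eps sg"
  then have "(norm (h - h0))\<^sup>2 \<le> eps * sg\<^sup>2" by (simp add: unc_ball_def)
  then have "norm (h - h0) \<le> sqrt (eps * sg\<^sup>2)" by (intro sq_le_sqrt) auto
  moreover have "norm h \<le> norm h0 + norm (h - h0)" by (metis norm_triangle_sub add.commute)
  ultimately show ?thesis by linarith
qed

lemma opt_SP1:
  fixes S :: "complex ^ 'n::finite ^ 'n"
  assumes opt: "is_opt (feas_P3 h0 eps sg Pbar Pt) (rate hs) S"
    and hopt: "hopt \<in> unc_ball h0 eps sg" "\<forall>h\<in>unc_ball h0 eps sg. hform S h \<le> hform S hopt"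
    and lt: "hform S hopt < Pt"
  shows "is_opt (feas_SP1 Pbar) (rate hs) S"
  unfolding is_opt_def
proof (intro conjI allI impI)
  have fS: "beam S" "power_con Pbar S" "interf_con h0 eps sg Pt S"
    using opt by (auto simp: is_opt_def feas_P3_def)
  then show "feas_SP1 Pbar S" by (simp add: feas_SP1_def)
  fix S' :: "complex ^ 'n ^ 'n" assume f': "feas_SP1 Pbar S'"
  show "rate hs S' \<le> rate hs S"
  proof (rule ccontr)
    assume nle: "\<not> rate hs S' \<le> rate hs S"
    obtain w where w: "\<forall>h. hform S h = (cmod (ip h w))\<^sup>2" "mtrace S = (norm w)\<^sup>2"
      using of_beam1[OF fS(1)] by blast
    obtain w' where w': "\<forall>h. hform S' h = (cmod (ip h w'))\<^sup>2" "mtrace S' = (norm w')\<^sup>2"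
      using of_beam1[of S'] f' unfolding feas_SP1_def by blast
    have r1: "rate hs S = ln (1 + (cmod (ip hs w))\<^sup>2)" using w(1) by (simp add: rate_def)
    have r2: "rate hs S' = ln (1 + (cmod (ip hs w'))\<^sup>2)" using w'(1) by (simp add: rate_def)
    have lt2: "cmod (ip hs w) < cmod (ip hs w')"
    proof -
      have "ln (1 + (cmod (ip hs w))\<^sup>2) < ln (1 + (cmod (ip hs w'))\<^sup>2)"
        using nle r1 r2 by linarith
      then show ?thesis using ln_mono_sq[OF _ norm_ge_zero norm_ge_zero] by blast
    qed
    define M where "M = hform S hopt"
    have M0: "0 \<le> M" using w(1) by (simp add: M_def)
    have sM: "sqrt M < sqrt Pt" using lt by (simp add: M_def)
    define K where "K = real CARD('n) * ((norm h0 + sqrt (eps * sg\<^sup>2)) * norm w')"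
    have bnd0: "0 \<le> norm h0 + sqrt (eps * sg\<^sup>2)"
      using ball_norm[OF hopt(1)] norm_ge_zero[of hopt] by linarith
    have K0: "0 \<le> K" unfolding K_def using bnd0 by (intro mult_nonneg_nonneg) auto
    have c: "0 < K + 1" using K0 by simp
    define t where "t = min 1 ((sqrt Pt - sqrt M) / (K + 1))"
    have t0: "0 < t" using sM c by (simp add: t_def divide_pos_pos)
    have t1: "t \<le> 1" by (simp add: t_def)
    have tb: "t * (K + 1) \<le> sqrt Pt - sqrt M"
    proof -
      have "t \<le> (sqrt Pt - sqrt M) / (K + 1)" by (simp add: t_def)
      then show ?thesis by (simp only: pos_le_divide_eq[OF c])
    qed
    obtain u where u: "cmod (ip hs w) < cmod (ip hs u)" "norm u \<le> (1-t) * norm w + t * norm w'"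
      "\<forall>h. cmod (ip h u) \<le> (1-t) * cmod (ip h w) + t * cmod (ip h w')"
      using comb[OF t0 t1 lt2] by blast
    have Pb: "(norm w)\<^sup>2 \<le> Pbar" using fS(2) w(2) by (simp add: power_con_def)
    have Pb': "(norm w')\<^sup>2 \<le> Pbar" using f' w'(2) by (simp add: power_con_def feas_SP1_def)
    have Pb0: "0 \<le> Pbar" using Pb zero_le_power2[of "norm w"] by linarith
    have "norm u \<le> sqrt Pbar"
    proof -
      have "(1-t) * norm w \<le> (1-t) * sqrt Pbar"
        using t1 sq_le_sqrt[OF Pb] by (intro mult_left_mono) auto
      moreover have "t * norm w' \<le> t * sqrt Pbar"
        using t0 sq_le_sqrt[OF Pb'] by (intro mult_left_mono) auto
      ultimately show ?thesis using u(2) by (simp add: algebra_simps)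
    qed
    then have pu: "(norm u)\<^sup>2 \<le> Pbar" using Pb0 by (intro le_sqrt_sq) auto
    have iu: "(cmod (ip h u))\<^sup>2 \<le> Pt" if hB: "h \<in> unc_ball h0 eps sg" for h
    proof -
      have a: "(cmod (ip h w))\<^sup>2 \<le> M" using hopt(2) hB w by (auto simp: M_def)
      have b: "cmod (ip h w') \<le> K"
      proof -
        have "cmod (ip h w') \<le> real CARD('n) * (norm h * norm w')" by (rule ip_bound)
        also have "\<dots> \<le> K" unfolding K_def using ball_norm[OF hB] bnd0
          by (intro mult_left_mono mult_right_mono) auto
        finally show ?thesis .
      qed
      have "(1-t) * cmod (ip h w) \<le> (1-t) * sqrt M"
        using t1 sq_le_sqrt[OF a] by (intro mult_left_mono) auto
      also have "\<dots> \<le> sqrt M" using t0 mult_nonneg_nonneg[of t "sqrt M"] M0 by (simp add: left_diff_distrib)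
      finally have x: "(1-t) * cmod (ip h w) \<le> sqrt M" .
      have y: "t * cmod (ip h w') \<le> t * K" using t0 b by (intro mult_left_mono) auto
      have "t * K < t * (K + 1)" using t0 by simp
      then have "cmod (ip h u) \<le> sqrt Pt" using u(3) x y tb by (smt (verit))
      moreover have "0 \<le> Pt" using lt M0 by (simp add: M_def)
      ultimately show ?thesis by (intro le_sqrt_sq) auto
    qed
    obtain S'' where S'': "beam S''" "\<forall>h. hform S'' h = (cmod (ip h u))\<^sup>2" "mtrace S'' = (norm u)\<^sup>2"
      using beam_of by blast
    have "feas_P3 h0 eps sg Pbar Pt S''"
      using S'' pu iu by (simp add: feas_P3_def power_con_def interf_con_def)
    then have "rate hs S'' \<le> rate hs S" using opt by (simp add: is_opt_def)
    moreover have "rate hs S < rate hs S''"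
    proof -
      have "rate hs S'' = ln (1 + (cmod (ip hs u))\<^sup>2)" using S''(2) by (simp add: rate_def)
      then show ?thesis using r1 ln_mono_sq2[OF u(1) norm_ge_zero] by simp
    qed
    ultimately show False by simp
  qed
qed

theorem lemma5:
  fixes hs h0 :: "complex ^ 'n" and sg eps Pbar Pt :: real
  assumes "sg > 0" "eps > 0" "Pbar > 0" "Pt > 0"
  shows
   "(\<forall>S1. is_opt (feas_SP1 Pbar) (rate hs) S1 \<and> interf_con h0 eps sg Pt S1
        \<longrightarrow> is_opt (feas_P3 h0 eps sg Pbar Pt) (rate hs) S1)
  \<and> (\<forall>S2. is_opt (feas_SP2 h0 eps sg Pt) (rate hs) S2 \<and> mtrace S2 \<le> Pbar
        \<longrightarrow> is_opt (feas_P3 h0 eps sg Pbar Pt) (rate hs) S2)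
  \<and> ((\<forall>S1. is_opt (feas_SP1 Pbar) (rate hs) S1 \<longrightarrow> \<not> interf_con h0 eps sg Pt S1)
     \<and> (\<forall>S2. is_opt (feas_SP2 h0 eps sg Pt) (rate hs) S2 \<longrightarrow> \<not> mtrace S2 \<le> Pbar)
     \<longrightarrow> (\<forall>S. is_opt (feas_P3 h0 eps sg Pbar Pt) (rate hs) S \<longrightarrow>
            mtrace S = Pbar \<and>
            (\<forall>hopt. hopt \<in> unc_ball h0 eps sg \<and>
                   (\<forall>h\<in>unc_ball h0 eps sg. hform S h \<le> hform S hopt)
                   \<longrightarrow> hform S hopt = Pt)))"
proof (intro conjI allI impI)
  fix S1 :: "complex ^ 'n ^ 'n"
  assume "is_opt (feas_SP1 Pbar) (rate hs) S1 \<and> interf_con h0 eps sg Pt S1"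
  then show "is_opt (feas_P3 h0 eps sg Pbar Pt) (rate hs) S1"
    by (auto simp: is_opt_def feas_SP1_def feas_P3_def)
next
  fix S2 :: "complex ^ 'n ^ 'n"
  assume "is_opt (feas_SP2 h0 eps sg Pt) (rate hs) S2 \<and> mtrace S2 \<le> Pbar"
  then show "is_opt (feas_P3 h0 eps sg Pbar Pt) (rate hs) S2"
    by (auto simp: is_opt_def feas_SP2_def feas_P3_def power_con_def)
next
  fix S :: "complex ^ 'n ^ 'n"
  assume H: "(\<forall>S1. is_opt (feas_SP1 Pbar) (rate hs) S1 \<longrightarrow> \<not> interf_con h0 eps sg Pt S1)
     \<and> (\<forall>S2. is_opt (feas_SP2 h0 eps sg Pt) (rate hs) S2 \<longrightarrow> \<not> mtrace S2 \<le> Pbar)"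
    and opt: "is_opt (feas_P3 h0 eps sg Pbar Pt) (rate hs) S"
  have fS: "power_con Pbar S" "interf_con h0 eps sg Pt S"
    using opt by (auto simp: is_opt_def feas_P3_def)
  show "mtrace S = Pbar"
  proof (rule ccontr)
    assume "mtrace S \<noteq> Pbar"
    then have "mtrace S < Pbar" using fS(1) by (simp add: power_con_def)
    then have "is_opt (feas_SP2 h0 eps sg Pt) (rate hs) S" by (rule opt_SP2[OF opt])
    then show False using H fS(1) by (simp add: power_con_def)
  qed
  fix hopt
  assume ho: "hopt \<in> unc_ball h0 eps sg \<and> (\<forall>h\<in>unc_ball h0 eps sg. hform S h \<le> hform S hopt)"
  show "hform S hopt = Pt"
  proof (rule ccontr)
    assume "hform S hopt \<noteq> Pt"
    then have "hform S hopt < Pt" using fS(2) ho by (auto simp: interf_con_def)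
    then have "is_opt (feas_SP1 Pbar) (rate hs) S"
      using opt_SP1[OF opt] ho by blast
    then show False using H fS(2) by blast
  qed
qed

end
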